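(* Let $\kappa$ be an infinite cardinal. There is a $\kappa^+$-system of width $\kappa$ with no cofinal branch.
   Context: Let $\lambda$ be an infinite regular cardinal. A binary relation $R$ is tree-like if whenever $a<_Rc$ and $b<_Rc$, then $a,b$ are $R$-comparable ($a=b$, $a<_Rb$ or $b<_Ra$). A $\lambda$-system is $S=\langle\bigcup_{\alpha\in I}\{\alpha\}\times\kappa_\alpha,\mathcal{R}\rangle$ where: $I\subseteq\lambda$ is unbounded, each $\kappa_\alpha$ is a cardinal with $0<\kappa_\alpha<\lambda$ (level $S_\alpha=\{\alpha\}\times\kappa_\alpha$); $\mathcal{R}$ is a set of binary, transitive, tree-like relations on the underlying set with $0<|\mathcal{R}|<\lambda$; if $(\alpha_0,\beta_0)<_R(\alpha_1,\beta_1)$ for $R\in\mathcal{R}$ then $\alpha_0<\alpha_1$; and for all $\alpha_0<\alpha_1$ in $I$ there are $\beta_0<\kappa_{\alpha_0},\beta_1<\kappa_{\alpha_1}$, $R\in\mathcal{R}$ with $(\alpha_0,\beta_0)<_R(\alpha_1,\beta_1)$. $\mathrm{width}(S)=\max(\sup_\alpha\kappa_\alpha,|\mathcal{R}|)$. A branch through $R\in\mathcal{R}$ is a set of pairwise $R$-comparable elements; it is cofinal if it meets $S_\alpha$ for unboundedly many $\alpha\in I$; $S$ has a cofinal branch if some $R\in\mathcal{R}$ has a cofinal branch. *)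

theory Defs
  imports Main
begin

unbundle cardinal_syntax

text \<open>
  Cardinals are represented as in HOL's BNF cardinal library: a cardinal is a
  cardinal order relation (Card_order), and the ordinals below the cardinal
  lambda are the elements of Field L, ordered by L.  The level S_alpha of a
  system is {alpha} x K alpha, where K alpha is a nonempty set of size kappa_alpha
  (only its cardinality matters).
\<close>

definition tree_like :: "'n rel \<Rightarrow> bool" where
  "tree_like R \<longleftrightarrow>
     (\<forall>a b c. (a, c) \<in> R \<and> (b, c) \<in> R \<longrightarrow> a = b \<or> (a, b) \<in> R \<or> (b, a) \<in> R)"

definition lambda_system ::
  "'i rel \<Rightarrow> 'i set \<Rightarrow> ('i \<Rightarrow> 'b set) \<Rightarrow> ('i \<times> 'b) rel set \<Rightarrow> bool" where
  "lambda_system L I K RR \<longleftrightarrow>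
     Card_order L \<and> \<not> finite (Field L) \<and> regularCard L \<and>
     I \<subseteq> Field L \<and> cofinal I L \<and>
     (\<forall>\<alpha>\<in>I. K \<alpha> \<noteq> {} \<and> |K \<alpha>| <o L) \<and>
     RR \<noteq> {} \<and> |RR| <o L \<and>
     (\<forall>R\<in>RR. R \<subseteq> Sigma I K \<times> Sigma I K \<and> trans R \<and> tree_like R) \<and>
     (\<forall>R\<in>RR. \<forall>a b. (a, b) \<in> R \<longrightarrow> fst a \<noteq> fst b \<and> (fst a, fst b) \<in> L) \<and>
     (\<forall>\<alpha>0\<in>I. \<forall>\<alpha>1\<in>I. \<alpha>0 \<noteq> \<alpha>1 \<and> (\<alpha>0, \<alpha>1) \<in> L \<longrightarrow>
        (\<exists>\<beta>0\<in>K \<alpha>0. \<exists>\<beta>1\<in>K \<alpha>1. \<exists>R\<in>RR. ((\<alpha>0, \<beta>0), (\<alpha>1, \<beta>1)) \<in> R))"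

text \<open>
  width(S) = max(sup_alpha kappa_alpha, |RR|) equals the cardinal k.
  Written out: every kappa_alpha and |RR| is at most k, and either |RR| >= k or
  the supremum of the kappa_alpha is at least k, i.e. every cardinal mu < k
  (every such mu is the size of a subset of Field k) is exceeded by some kappa_alpha.
\<close>
definition has_width ::
  "'i set \<Rightarrow> ('i \<Rightarrow> 'b set) \<Rightarrow> ('i \<times> 'b) rel set \<Rightarrow> 'k rel \<Rightarrow> bool" where
  "has_width I K RR k \<longleftrightarrow>
     (\<forall>\<alpha>\<in>I. |K \<alpha>| \<le>o k) \<and> |RR| \<le>o k \<and>
     (k \<le>o |RR| \<or> (\<forall>A. A \<subseteq> Field k \<and> |A| <o k \<longrightarrow> (\<exists>\<alpha>\<in>I. |A| <o |K \<alpha>| )))"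

definition is_branch :: "'i set \<Rightarrow> ('i \<Rightarrow> 'b set) \<Rightarrow> ('i \<times> 'b) rel \<Rightarrow> ('i \<times> 'b) set \<Rightarrow> bool" where
  "is_branch I K R B \<longleftrightarrow> B \<subseteq> Sigma I K \<and>
     (\<forall>x\<in>B. \<forall>y\<in>B. x = y \<or> (x, y) \<in> R \<or> (y, x) \<in> R)"

definition is_cofinal_branch ::
  "'i rel \<Rightarrow> 'i set \<Rightarrow> ('i \<Rightarrow> 'b set) \<Rightarrow> ('i \<times> 'b) rel \<Rightarrow> ('i \<times> 'b) set \<Rightarrow> bool" where
  "is_cofinal_branch L I K R B \<longleftrightarrow> is_branch I K R B \<and>
     cofinal {\<alpha>\<in>I. \<exists>\<beta>. (\<alpha>, \<beta>) \<in> B} L"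

definition has_cofinal_branch ::
  "'i rel \<Rightarrow> 'i set \<Rightarrow> ('i \<Rightarrow> 'b set) \<Rightarrow> ('i \<times> 'b) rel set \<Rightarrow> bool" where
  "has_cofinal_branch L I K RR \<longleftrightarrow> (\<exists>R\<in>RR. \<exists>B. is_cofinal_branch L I K R B)"

end

theory Submission
  imports Defs
begin

lemma inf_ne: "\<not> finite A \<Longrightarrow> \<exists>a. a \<in> A"
  by (metis all_not_in_conv finite.emptyI)

lemma inf_avoid:
  assumes "\<not> finite A"
  shows "\<exists>g. inj_on g A \<and> g ` A \<subseteq> A - {x}"
proof -
  have "\<not> finite (A - {x})" using assms by simp
  then obtain h :: "nat \<Rightarrow> _" where h: "inj h" "range h \<subseteq> A - {x}"
    using infinite_countable_subset by blast
  define g where "g y = (if y = x then h 0 else if y \<in> range h then h (Suc (inv h y)) else y)" for y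
  have "inj_on g A"
  proof (rule inj_onI)
    fix y y' assume "y \<in> A" "y' \<in> A" "g y = g y'"
    then show "y = y'" using h unfolding g_def
      by (auto split: if_splits simp: inj_eq f_inv_into_f)
  qed
  moreover have "g ` A \<subseteq> A - {x}" using h unfolding g_def by auto
  ultimately show ?thesis by blast
qed

theorem mainTheorem11:
  fixes k :: "'a rel"
  assumes "Card_order k" and "\<not> finite (Field k)"
  shows "\<exists>(I :: 'a set set) (K :: 'a set \<Rightarrow> 'a set) (RR :: ('a set \<times> 'a) rel set).
           lambda_system (cardSuc k) I K RR \<and> has_width I K RR k \<and>
           \<not> has_cofinal_branch (cardSuc k) I K RR"
proof -
  define L where "L = cardSuc k"
  have CL: "Card_order L" unfolding L_def using assms cardSuc_Card_order by blast
  have FL: "\<not> finite (Field L)" unfolding L_def using assms cardSuc_finite by blast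
  have regL: "regularCard L" unfolding L_def by (rule regularCard_cardSuc) (simp add: assms cinfinite_def)
  obtain x0 where x0: "x0 \<in> Field k" using inf_ne[OF assms(2)] by blast
  obtain g where g: "inj_on g (Field k)" "g ` Field k \<subseteq> Field k - {x0}"
    using inf_avoid[OF assms(2)] by blast
  have kF: "|Field k| =o k" using assms(1) card_of_Field_ordIso by blast
  have "\<forall>\<alpha>\<in>Field L. \<exists>f. inj_on f (underS L \<alpha>) \<and> f ` underS L \<alpha> \<subseteq> Field k - {x0}"
  proof
    fix \<alpha> assume a: "\<alpha> \<in> Field L"
    have "|underS L \<alpha>| <o L" using card_of_underS[OF CL a] .
    then have "|underS L \<alpha>| \<le>o k" unfolding L_def
      using cardSuc_ordLeq_ordLess[OF assms(1) card_of_Card_order] by blast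
    then have "|underS L \<alpha>| \<le>o |Field k|" using kF ordLeq_ordIso_trans ordIso_symmetric by blast
    then obtain f where f: "inj_on f (underS L \<alpha>)" "f ` underS L \<alpha> \<subseteq> Field k"
      using card_of_ordLeq[of "underS L \<alpha>" "Field k", THEN iffD2] by blast
    have "inj_on (g \<circ> f) (underS L \<alpha>)" using f(1) inj_on_subset[OF g(1) f(2)] by (rule comp_inj_on)
    moreover have "(g \<circ> f) ` underS L \<alpha> \<subseteq> Field k - {x0}" using f g by auto
    ultimately show "\<exists>f. inj_on f (underS L \<alpha>) \<and> f ` underS L \<alpha> \<subseteq> Field k - {x0}" by blast
  qed
  from bchoice[OF this] obtain e where eall: "\<forall>\<alpha>\<in>Field L. inj_on (e \<alpha>) (underS L \<alpha>) \<and> e \<alpha> ` underS L \<alpha> \<subseteq> Field k - {x0}"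
    by blast
  have e: "\<And>\<alpha>. \<alpha> \<in> Field L \<Longrightarrow> inj_on (e \<alpha>) (underS L \<alpha>)"
    "\<And>\<alpha>. \<alpha> \<in> Field L \<Longrightarrow> e \<alpha> ` underS L \<alpha> \<subseteq> Field k - {x0}"
    using eall by auto
  define I where "I = Field L"
  define K where "K = (\<lambda>\<alpha>::'a set. Field k)"
  define R where "R = {(a, b). \<exists>\<gamma> \<alpha>. \<alpha> \<in> Field L \<and> \<gamma> \<in> underS L \<alpha> \<and>
                        a = (\<gamma>, x0) \<and> b = (\<alpha>, e \<alpha> \<gamma>)}"
  define RR where "RR = {R}"
  have Rsrc: "snd a = x0" if "(a, b) \<in> R" for a b using that unfolding R_def by auto
  have Rtgt: "snd b \<noteq> x0" if "(a, b) \<in> R" for a b using that e(2) unfolding R_def by fastforce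
  have ls: "lambda_system L I K RR"
    unfolding lambda_system_def
  proof (intro conjI)
    show "Card_order L" "\<not> finite (Field L)" "regularCard L" by fact+
    show "I \<subseteq> Field L" unfolding I_def by simp
    show "cofinal I L" unfolding I_def cofinal_def using infinite_Card_order_limit[OF CL FL] by blast
    have kL: "|Field k| <o L" unfolding L_def
      using kF cardSuc_greater[OF assms(1)] ordIso_ordLess_trans by blast
    show "\<forall>\<alpha>\<in>I. K \<alpha> \<noteq> {} \<and> |K \<alpha>| <o L" unfolding K_def using x0 kL by auto
    show "RR \<noteq> {}" unfolding RR_def by simp
    show "|RR| <o L" unfolding RR_def
      using finite_ordLess_infinite[of "|{R}|" L] FL CL card_of_Well_order[of "{R}"]
      by (simp add: Field_card_of card_order_on_def)
    show "\<forall>R\<in>RR. R \<subseteq> Sigma I K \<times> Sigma I K \<and> trans R \<and> tree_like R"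
    proof -
      have "R \<subseteq> Sigma I K \<times> Sigma I K"
        unfolding R_def I_def K_def using e(2) x0 by (auto simp: underS_def Field_def) blast+
      moreover have "trans R" unfolding trans_def using Rsrc Rtgt by metis
      moreover have "tree_like R" unfolding tree_like_def
      proof (intro allI impI)
        fix a b c assume "(a, c) \<in> R \<and> (b, c) \<in> R"
        then obtain \<gamma> \<alpha> \<gamma>' where "\<alpha> \<in> Field L" "\<gamma> \<in> underS L \<alpha>" "\<gamma>' \<in> underS L \<alpha>"
          "a = (\<gamma>, x0)" "b = (\<gamma>', x0)" "e \<alpha> \<gamma> = e \<alpha> \<gamma>'" unfolding R_def by auto
        then show "a = b \<or> (a, b) \<in> R \<or> (b, a) \<in> R" using e(1) inj_onD by metis
      qed
      ultimately show ?thesis unfolding RR_def by simp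
    qed
    show "\<forall>R\<in>RR. \<forall>a b. (a, b) \<in> R \<longrightarrow> fst a \<noteq> fst b \<and> (fst a, fst b) \<in> L"
      unfolding RR_def R_def by (auto simp: underS_def)
    show "\<forall>\<alpha>0\<in>I. \<forall>\<alpha>1\<in>I. \<alpha>0 \<noteq> \<alpha>1 \<and> (\<alpha>0, \<alpha>1) \<in> L \<longrightarrow>
        (\<exists>\<beta>0\<in>K \<alpha>0. \<exists>\<beta>1\<in>K \<alpha>1. \<exists>R\<in>RR. ((\<alpha>0, \<beta>0), (\<alpha>1, \<beta>1)) \<in> R)"
    proof (intro ballI impI)
      fix \<alpha>0 \<alpha>1 assume a: "\<alpha>0 \<in> I" "\<alpha>1 \<in> I" "\<alpha>0 \<noteq> \<alpha>1 \<and> (\<alpha>0, \<alpha>1) \<in> L"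
      then have u: "\<alpha>0 \<in> underS L \<alpha>1" by (simp add: underS_def)
      have "((\<alpha>0, x0), (\<alpha>1, e \<alpha>1 \<alpha>0)) \<in> R" unfolding R_def using a u I_def by auto
      moreover have "e \<alpha>1 \<alpha>0 \<in> K \<alpha>1" using e(2) a u unfolding K_def I_def by blast
      ultimately show "\<exists>\<beta>0\<in>K \<alpha>0. \<exists>\<beta>1\<in>K \<alpha>1. \<exists>R\<in>RR. ((\<alpha>0, \<beta>0), (\<alpha>1, \<beta>1)) \<in> R"
        unfolding RR_def K_def using x0 by blast
    qed
  qed
  have hw: "has_width I K RR k"
    unfolding has_width_def
  proof (intro conjI)
    show "\<forall>\<alpha>\<in>I. |K \<alpha>| \<le>o k" unfolding K_def using kF ordIso_iff_ordLeq by blast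
    show "|RR| \<le>o k" unfolding RR_def
      using finite_ordLess_infinite[of "|{R}|" k] assms card_of_Well_order[of "{R}"]
      by (simp add: Field_card_of card_order_on_def ordLess_imp_ordLeq)
    show "k \<le>o |RR| \<or> (\<forall>A. A \<subseteq> Field k \<and> |A| <o k \<longrightarrow> (\<exists>\<alpha>\<in>I. |A| <o |K \<alpha>| ))"
    proof (rule disjI2, intro allI impI)
      fix A assume A: "A \<subseteq> Field k \<and> |A| <o k"
      obtain a where a: "a \<in> Field L" using inf_ne[OF FL] by blast
      have "|A| <o |Field k|" using A ordLess_ordIso_trans[OF _ ordIso_symmetric[OF kF]] by blast
      then show "\<exists>\<alpha>\<in>I. |A| <o |K \<alpha>|" unfolding K_def I_def using a by blast
    qed
  qed
  have nb: "\<not> has_cofinal_branch L I K RR"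
  proof
    assume "has_cofinal_branch L I K RR"
    then obtain B where B: "is_branch I K R B" "cofinal {\<alpha>\<in>I. \<exists>\<beta>. (\<alpha>, \<beta>) \<in> B} L"
      unfolding has_cofinal_branch_def is_cofinal_branch_def RR_def by blast
    let ?C = "{\<alpha>\<in>I. \<exists>\<beta>. (\<alpha>, \<beta>) \<in> B}"
    obtain a where a: "a \<in> Field L" using inf_ne[OF FL] by blast
    have cof: "\<exists>b\<in>?C. a \<noteq> b \<and> (a, b) \<in> L" if "a \<in> Field L" for a
      using B(2) that unfolding cofinal_def by (rule bspec)
    obtain c1 where c1: "c1 \<in> ?C" "a \<noteq> c1" "(a, c1) \<in> L" using cof[OF a] by (elim bexE conjE) simp
    have c1F: "c1 \<in> Field L" using c1(3) by (rule FieldI2)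
    obtain c2 where c2: "c2 \<in> ?C" "c1 \<noteq> c2" "(c1, c2) \<in> L" using cof[OF c1F] by (elim bexE conjE) simp
    have c2F: "c2 \<in> Field L" using c2(3) by (rule FieldI2)
    obtain c3 where c3: "c3 \<in> ?C" "c2 \<noteq> c3" "(c2, c3) \<in> L" using cof[OF c2F] by (elim bexE conjE) simp
    have antis: "antisym L" using CL
      by (simp add: card_order_on_def well_order_on_def linear_order_on_def partial_order_on_def)
    have "c1 \<noteq> c3"
    proof
      assume "c1 = c3"
      then have "(c2, c1) \<in> L" using c3(3) by simp
      then show False using antisymD[OF antis c2(3)] c2(2) by simp
    qed
    from c1(1) obtain b1 where b1: "(c1, b1) \<in> B" by auto
    from c2(1) obtain b2 where b2: "(c2, b2) \<in> B" by auto
    from c3(1) obtain b3 where b3: "(c3, b3) \<in> B" by auto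
    note bs = b1 b2 b3
    have brB: "\<forall>x\<in>B. \<forall>y\<in>B. x = y \<or> (x, y) \<in> R \<or> (y, x) \<in> R"
      using B(1) by (simp add: is_branch_def)
    have rel: "(x, y) \<in> R \<or> (y, x) \<in> R" if "x \<in> B" "y \<in> B" "fst x \<noteq> fst y" for x y
    proof -
      have "x \<noteq> y" using that(3) by auto
      then show ?thesis using brB that(1,2) by auto
    qed
    have r12: "((c1,b1),(c2,b2)) \<in> R \<or> ((c2,b2),(c1,b1)) \<in> R" using rel[OF bs(1) bs(2)] c2(2) by simp
    have r23: "((c2,b2),(c3,b3)) \<in> R \<or> ((c3,b3),(c2,b2)) \<in> R" using rel[OF bs(2) bs(3)] c3(2) by simp
    have r13: "((c1,b1),(c3,b3)) \<in> R \<or> ((c3,b3),(c1,b1)) \<in> R" using rel[OF bs(1) bs(3)] \<open>c1 \<noteq> c3\<close> by simp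
    have s12: "(b1 = x0) \<noteq> (b2 = x0)" using r12 Rsrc[of "(c1,b1)" "(c2,b2)"] Rtgt[of "(c1,b1)" "(c2,b2)"] Rsrc[of "(c2,b2)" "(c1,b1)"] Rtgt[of "(c2,b2)" "(c1,b1)"] by auto
    have s23: "(b2 = x0) \<noteq> (b3 = x0)" using r23 Rsrc[of "(c2,b2)" "(c3,b3)"] Rtgt[of "(c2,b2)" "(c3,b3)"] Rsrc[of "(c3,b3)" "(c2,b2)"] Rtgt[of "(c3,b3)" "(c2,b2)"] by auto
    have s13: "(b1 = x0) \<noteq> (b3 = x0)" using r13 Rsrc[of "(c1,b1)" "(c3,b3)"] Rtgt[of "(c1,b1)" "(c3,b3)"] Rsrc[of "(c3,b3)" "(c1,b1)"] Rtgt[of "(c3,b3)" "(c1,b1)"] by auto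
    show False using s12 s23 s13 by blast
  qed
  show ?thesis using ls hw nb unfolding L_def by blast
qed

end
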